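(* Let $G=(V,E)$ be a finite simple connected graph with graph distance $d$, let $S$ be a multiset of $s$ vertices, $\delta>0$, and $\Phi^{*}(v)=\sum_{u\in S}d(u,v)$. Let $q$ be a vertex such that $\Phi^{*}(q)\le\Phi^{*}(v)+\delta s$ for every $v\in N(q)$. Then $\Lambda^{*}(q)\le\frac{s(1+\delta)}{2}$.
   Context: For vertices $q,v$, a vertex $u$ is consistent with $(q,v)$ if $q=v=u$, or $q\ne v$ and $v$ lies on a shortest path between $u$ and $q$; $N(q,v)$ is the set of such $u$. $N(q)$ is the neighbor set of $q$. $\Lambda^{*}(q)=\max_{v\in N(q)}|S\cap N(q,v)|$, where $S\cap X$ is the multiset of elements of $S$ lying in $X$ (with multiplicity); sums over $S$ are with multiplicity. *)

theory Defs
  imports Complex_Main "HOL-Library.Multiset"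
begin

definition simple_graph :: "'a set \<Rightarrow> ('a \<Rightarrow> 'a \<Rightarrow> bool) \<Rightarrow> bool" where
  "simple_graph V E \<longleftrightarrow> finite V \<and> (\<forall>u v. E u v \<longrightarrow> u \<in> V \<and> v \<in> V)
     \<and> (\<forall>u v. E u v \<longrightarrow> E v u) \<and> (\<forall>u. \<not> E u u)"

fun walk :: "('a \<Rightarrow> 'a \<Rightarrow> bool) \<Rightarrow> 'a list \<Rightarrow> bool" where
  "walk E [] = False"
| "walk E [x] = True"
| "walk E (x # y # xs) = (E x y \<and> walk E (y # xs))"

definition connected_graph :: "'a set \<Rightarrow> ('a \<Rightarrow> 'a \<Rightarrow> bool) \<Rightarrow> bool" where
  "connected_graph V E \<longleftrightarrow> (\<forall>u\<in>V. \<forall>v\<in>V. \<exists>xs. walk E xs \<and> hd xs = u \<and> last xs = v)"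

definition gdist :: "('a \<Rightarrow> 'a \<Rightarrow> bool) \<Rightarrow> 'a \<Rightarrow> 'a \<Rightarrow> nat" where
  "gdist E u v = (LEAST n. \<exists>xs. walk E xs \<and> hd xs = u \<and> last xs = v \<and> length xs = Suc n)"

definition nbrs :: "('a \<Rightarrow> 'a \<Rightarrow> bool) \<Rightarrow> 'a \<Rightarrow> 'a set" where
  "nbrs E q = {v. E q v}"

definition consistent_set :: "'a set \<Rightarrow> ('a \<Rightarrow> 'a \<Rightarrow> bool) \<Rightarrow> 'a \<Rightarrow> 'a \<Rightarrow> 'a set" where
  "consistent_set V E q v = {u \<in> V. (q = v \<and> v = u) \<or>
      (q \<noteq> v \<and> gdist E u q = gdist E u v + gdist E v q)}"

definition Phi_star :: "('a \<Rightarrow> 'a \<Rightarrow> bool) \<Rightarrow> 'a multiset \<Rightarrow> 'a \<Rightarrow> nat" where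
  "Phi_star E S v = (\<Sum>u\<in>#S. gdist E u v)"

definition Lambda_star :: "'a set \<Rightarrow> ('a \<Rightarrow> 'a \<Rightarrow> bool) \<Rightarrow> 'a multiset \<Rightarrow> 'a \<Rightarrow> nat" where
  "Lambda_star V E S q = Max (insert 0
      ((\<lambda>v. size (filter_mset (\<lambda>u. u \<in> consistent_set V E q v) S)) ` nbrs E q))"

end

theory Submission
  imports Defs
begin

lemma walk_snoc: "walk E xs \<Longrightarrow> E (last xs) y \<Longrightarrow> walk E (xs @ [y])"
  by (induction E xs rule: walk.induct) auto

lemma walk_ne: "walk E xs \<Longrightarrow> xs \<noteq> []"
  by (cases xs) auto

lemma gdist_le:
  assumes "walk E xs" "hd xs = u" "last xs = v"
  shows "gdist E u v \<le> length xs - 1"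
proof -
  have "xs \<noteq> []" using assms walk_ne by blast
  then have "length xs = Suc (length xs - 1)" by simp
  then show ?thesis unfolding gdist_def using assms
    by (intro Least_le) blast
qed

lemma gdist_ex:
  assumes "walk E xs" "hd xs = u" "last xs = v"
  shows "\<exists>ys. walk E ys \<and> hd ys = u \<and> last ys = v \<and> length ys = Suc (gdist E u v)"
proof -
  have "xs \<noteq> []" using assms walk_ne by blast
  then have "length xs = Suc (length xs - 1)" by simp
  then have "\<exists>n xs. walk E xs \<and> hd xs = u \<and> last xs = v \<and> length xs = Suc n" using assms by blast
  then obtain n where "\<exists>xs. walk E xs \<and> hd xs = u \<and> last xs = v \<and> length xs = Suc n" by blast
  then show ?thesis unfolding gdist_def by (rule LeastI)
qed

lemma gdist_step:
  assumes "walk E xs" "hd xs = u" "last xs = q" "E q v"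
  shows "gdist E u v \<le> gdist E u q + 1"
proof -
  obtain ys where ys: "walk E ys" "hd ys = u" "last ys = q" "length ys = Suc (gdist E u q)"
    using gdist_ex[OF assms(1-3)] by blast
  have ne: "ys \<noteq> []" using ys walk_ne by blast
  have "walk E (ys @ [v])" using walk_snoc ys assms(4) by metis
  moreover have "hd (ys @ [v]) = u" using ne ys by simp
  moreover have "last (ys @ [v]) = v" by simp
  ultimately have "gdist E u v \<le> length (ys @ [v]) - 1" by (rule gdist_le)
  then show ?thesis using ys by simp
qed

lemma gdist_edge:
  assumes "E v q" "v \<noteq> q"
  shows "gdist E v q = 1"
proof -
  have w: "walk E [v, q]" using assms by simp
  have le: "gdist E v q \<le> 1" using gdist_le[OF w] by simp
  obtain ys where ys: "walk E ys" "hd ys = v" "last ys = q" "length ys = Suc (gdist E v q)"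
    using gdist_ex[OF w] by auto
  have "gdist E v q \<noteq> 0"
  proof
    assume "gdist E v q = 0"
    then obtain a where "ys = [a]" using ys(4) by (cases ys) auto
    then show False using ys assms by simp
  qed
  then show ?thesis using le by simp
qed

lemma msum_bound:
  fixes f g :: "'a \<Rightarrow> nat"
  assumes "\<forall>u\<in>#S. real (f u) \<le> real (g u) + 1 - 2 * (if P u then 1 else 0)"
  shows "real (\<Sum>u\<in>#S. f u) \<le> real (\<Sum>u\<in>#S. g u) + real (size S) - 2 * real (size (filter_mset P S))"
  using assms
proof (induction S)
  case empty
  then show ?case by simp
next
  case (add x S)
  then have "real (f x) \<le> real (g x) + 1 - 2 * (if P x then 1 else 0)" by simp
  moreover have "real (\<Sum>u\<in>#S. f u) \<le> real (\<Sum>u\<in>#S. g u) + real (size S) - 2 * real (size (filter_mset P S))"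
    using add by simp
  ultimately show ?case by (cases "P x") auto
qed

theorem lemma13:
  fixes V :: "'a set" and E :: "'a \<Rightarrow> 'a \<Rightarrow> bool" and S :: "'a multiset"
    and s :: nat and \<delta> :: real and q :: 'a
  assumes "simple_graph V E" and "connected_graph V E"
    and "set_mset S \<subseteq> V" and "size S = s"
    and "\<delta> > 0" and "q \<in> V"
    and "\<forall>v \<in> nbrs E q. real (Phi_star E S q) \<le> real (Phi_star E S v) + \<delta> * real s"
  shows "real (Lambda_star V E S q) \<le> real s * (1 + \<delta>) / 2"
proof -
  have G: "finite V" "\<And>u v. E u v \<Longrightarrow> u \<in> V \<and> v \<in> V" "\<And>u v. E u v \<Longrightarrow> E v u" "\<And>u. \<not> E u u"
    using assms(1) unfolding simple_graph_def by auto
  have fin: "finite (nbrs E q)"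
    using G by (metis (no_types, lifting) mem_Collect_eq nbrs_def rev_finite_subset subsetI)
  have each: "real (size (filter_mset (\<lambda>u. u \<in> consistent_set V E q v) S)) \<le> real s * (1 + \<delta>) / 2"
    if v: "v \<in> nbrs E q" for v
  proof -
    have Eqv: "E q v" using v by (simp add: nbrs_def)
    have nq: "q \<noteq> v" using Eqv G(4) by auto
    have d1: "gdist E v q = 1" using gdist_edge[of E v q] G(3)[OF Eqv] nq by auto
    let ?P = "\<lambda>u. u \<in> consistent_set V E q v"
    have pt: "\<forall>u\<in>#S. real (gdist E u v) \<le> real (gdist E u q) + 1 - 2 * (if ?P u then 1 else 0)"
    proof
      fix u assume "u \<in># S"
      then have uV: "u \<in> V" using assms(3) by auto
      then obtain xs where xs: "walk E xs" "hd xs = u" "last xs = q"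
        using assms(2,6) unfolding connected_graph_def by blast
      have st: "gdist E u v \<le> gdist E u q + 1" using gdist_step[OF xs Eqv] .
      show "real (gdist E u v) \<le> real (gdist E u q) + 1 - 2 * (if ?P u then 1 else 0)"
      proof (cases "?P u")
        case True
        then have "gdist E u q = gdist E u v + gdist E v q"
          using nq unfolding consistent_set_def by auto
        then show ?thesis using True d1 by simp
      next
        case False
        then show ?thesis using st by simp
      qed
    qed
    have "real (Phi_star E S v) \<le> real (Phi_star E S q) + real s - 2 * real (size (filter_mset ?P S))"
      unfolding Phi_star_def using msum_bound[OF pt] assms(4) by simp
    moreover have "real (Phi_star E S q) \<le> real (Phi_star E S v) + \<delta> * real s" using assms(7) v by blast
    ultimately show ?thesis by (simp add: field_simps)
  qed
  have "Lambda_star V E S q \<in> insert 0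
      ((\<lambda>v. size (filter_mset (\<lambda>u. u \<in> consistent_set V E q v) S)) ` nbrs E q)"
    unfolding Lambda_star_def using fin by (intro Max_in) auto
  then show ?thesis using each assms(5) by auto
qed

end
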